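(* For every integer $k\ge 0$, $$\sum_{i=1}^{2^{k}}B_i(t)=\frac{1}{2}\bigl((t+2)^{k}+t^{k}\bigr).$$
   Context: The Stern polynomials $B_n(t)\in\mathbb{Z}[t]$, $n\ge 0$, are defined by $B_0(t)=0$, $B_1(t)=1$, $B_{2n}(t)=tB_n(t)$ and $B_{2n+1}(t)=B_n(t)+B_{n+1}(t)$ for $n\ge 1$. *)

theory Defs
  imports "HOL-Computational_Algebra.Polynomial"
begin

function stern_poly :: "nat \<Rightarrow> int poly" where
  "stern_poly n =
     (if n = 0 then 0
      else if n = 1 then 1
      else if even n then [:0, 1:] * stern_poly (n div 2)
      else stern_poly (n div 2) + stern_poly (n div 2 + 1))"
  by pat_completeness auto
termination
  by (relation "measure id") (auto elim: oddE)

end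

theory Submission
  imports Defs
begin

declare stern_poly.simps[simp del]

lemma sp0[simp]: "stern_poly 0 = 0" by (simp add: stern_poly.simps)
lemma sp1[simp]: "stern_poly (Suc 0) = 1" by (simp add: stern_poly.simps)
lemma sp_even: "n > 0 \<Longrightarrow> stern_poly (2*n) = [:0,1:] * stern_poly n"
  by (subst stern_poly.simps) auto
lemma sp_odd: "stern_poly (2*n+1) = stern_poly n + stern_poly (n+1)"
  by (cases "n = 0") (subst stern_poly.simps, simp)+

lemma sp_pow: "stern_poly (2^k) = [:0,1:]^k"
proof (induction k)
  case (Suc k)
  have "stern_poly (2^Suc k) = stern_poly (2*2^k)" by simp
  also have "\<dots> = [:0,1:] * stern_poly (2^k)" by (rule sp_even) simp
  finally show ?case using Suc by simp
qed simp

lemma sum_double: "(\<Sum>i = 1..2*n. stern_poly i) = [:2,1:] * (\<Sum>i = 1..n. stern_poly i) - stern_poly n"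
proof (induction n)
  case 0 then show ?case by simp
next
  case (Suc n)
  have e: "2 * Suc n = Suc (Suc (2*n))" by simp
  have "(\<Sum>i = 1..2*Suc n. stern_poly i) = (\<Sum>i = 1..2*n. stern_poly i) + stern_poly (2*n+1) + stern_poly (2*(n+1))"
    unfolding e by (simp add: add.assoc)
  also have "\<dots> = [:2,1:] * (\<Sum>i = 1..n. stern_poly i) - stern_poly n + stern_poly n + stern_poly (n+1) + [:0,1:] * stern_poly (n+1)"
    using Suc sp_odd[of n] sp_even[of "n+1"] by (simp add: numeral_poly)
  also have "\<dots> = [:2,1:] * (\<Sum>i = 1..Suc n. stern_poly i) - stern_poly (Suc n)"
    by (simp add: algebra_simps numeral_mult_conv_smult[symmetric] mult.commute)
  finally show ?case .
qed

lemma two_smult: "smult 2 p = [:2:] * (p::int poly)" by simp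

theorem corollary3p3:
  fixes k :: nat
  shows "smult 2 (\<Sum>i = 1..2 ^ k. stern_poly i) = [:2, 1:] ^ k + [:0, 1:] ^ k"
proof (induction k)
  case 0 then show ?case by (simp add: numeral_poly)
next
  case (Suc k)
  have "smult 2 (\<Sum>i = 1..2 ^ Suc k. stern_poly i) = smult 2 ([:2,1:] * (\<Sum>i = 1..2^k. stern_poly i) - [:0,1:]^k)"
    using sum_double[of "2^k"] by (simp add: sp_pow)
  also have "\<dots> = [:2,1:] * smult 2 (\<Sum>i = 1..2^k. stern_poly i) - smult 2 ([:0,1:]^k)"
    by (simp add: smult_diff_right mult_smult_right)
  also have "\<dots> = [:2,1:] * ([:2, 1:] ^ k + [:0, 1:] ^ k) - smult 2 ([:0,1:]^k)"
    using Suc by simp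
  also have "\<dots> = [:2, 1:] ^ Suc k + [:0, 1:] ^ Suc k"
    by (simp add: algebra_simps)
  finally show ?case .
qed

end
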